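(* The set Ghost World $\mathrm{GW}$ of bipartite correlations is closed under wirings: for any finite collection of boxes $P_1,\dots,P_n\in\mathrm{GW}$ and any pair of wirings $\mathcal{W}_A,\mathcal{W}_B$, the wired box $\mathcal{W}_A\otimes\mathcal{W}_B(\otimes_{i=1}^nP_i)$ belongs to $\mathrm{GW}$.
   Context: A bipartite box is a conditional distribution $P(a,b|x,y)$ with finite input alphabets $\mathcal{X},\mathcal{Y}$ and finite output alphabets $\mathcal{A},\mathcal{B}$; tripartite boxes $P(a_1,a_2,a_3|x_1,x_2,x_3)$ are defined analogously. A multipartite box is no-signalling if, for every party, summing over that party's output gives a result independent of that party's input. Ghost World: a bipartite box $P(a,b|x,y)$ belongs to $\mathrm{GW}$ iff there exist no-signalling tripartite boxes $P_A(a,a',b|x,x',y)$ (with $a,a'\in\mathcal{A}$, $x,x'\in\mathcal{X}$) and $P_B(a,b,b'|x,y,y')$ (with $b,b'\in\mathcal{B}$, $y,y'\in\mathcal{Y}$) such that (1) $P_A$ is invariant under exchanging its first two parties, i.e. $P_A(a,a',b|x,x',y)=P_A(a',a,b|x',x,y)$, and $P_B$ is invariant under exchanging its last two parties, i.e. $P_B(a,b,b'|x,y,y')=P_B(a,b',b|x,y',y)$; (2) $P(a,b|x,y)=\sum_{a'}P_A(a,a',b|x,x',y)=\sum_{b'}P_B(a,b,b'|x,y,y')$ for all $x',y'$. ($\mathrm{GW}$ is considered in every bipartite Bell scenario.) Wirings: given $n$ bipartite boxes $P_1,\dots,P_n$ (each in some bipartite Bell scenario), with Alice holding the first side of each and Bob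 the second, and a target scenario $(\mathcal{X}',\mathcal{Y}',\mathcal{A}',\mathcal{B}')$, a (deterministic) wiring $\mathcal{W}_A$ for Alice is a procedure that, on effective input $x'\in\mathcal{X}'$, sequentially chooses a not-yet-used box $i$ and an input for Alice's side of that box and receives the output, where each choice is a function of $x'$ and all previous boxes, inputs and outputs; finally it outputs $a'\in\mathcal{A}'$ as a function of $x'$ and the full history. Bob's wiring $\mathcal{W}_B$ is analogous. Using the boxes independently this defines the box $\mathcal{W}_A\otimes\mathcal{W}_B(\otimes_{i=1}^nP_i)(a',b'|x',y')$. *)

theory Defs
  imports Complex_Main "HOL-Library.FuncSet"
begin

text \<open>A bipartite box is a function P a b x y (output a, output b, input x, input y) and
only its values on the alphabets matter. A tripartite box is Q a1 a2 a3 x1 x2 x3.\<close>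

type_synonym box2 = "nat \<Rightarrow> nat \<Rightarrow> nat \<Rightarrow> nat \<Rightarrow> real"
type_synonym box3 = "nat \<Rightarrow> nat \<Rightarrow> nat \<Rightarrow> nat \<Rightarrow> nat \<Rightarrow> nat \<Rightarrow> real"

definition scenario :: "nat set \<Rightarrow> nat set \<Rightarrow> nat set \<Rightarrow> nat set \<Rightarrow> bool" where
  "scenario X Y A B \<longleftrightarrow> finite X \<and> finite Y \<and> finite A \<and> finite B \<and>
     X \<noteq> {} \<and> Y \<noteq> {} \<and> A \<noteq> {} \<and> B \<noteq> {}"

definition is_box2 :: "nat set \<Rightarrow> nat set \<Rightarrow> nat set \<Rightarrow> nat set \<Rightarrow> box2 \<Rightarrow> bool" where
  "is_box2 X Y A B P \<longleftrightarrow>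
     (\<forall>x\<in>X. \<forall>y\<in>Y. (\<forall>a\<in>A. \<forall>b\<in>B. 0 \<le> P a b x y) \<and> (\<Sum>a\<in>A. \<Sum>b\<in>B. P a b x y) = 1)"

definition is_box3 :: "nat set \<Rightarrow> nat set \<Rightarrow> nat set \<Rightarrow> nat set \<Rightarrow> nat set \<Rightarrow> nat set
     \<Rightarrow> box3 \<Rightarrow> bool" where
  "is_box3 X1 X2 X3 A1 A2 A3 Q \<longleftrightarrow>
     (\<forall>x1\<in>X1. \<forall>x2\<in>X2. \<forall>x3\<in>X3.
        (\<forall>a1\<in>A1. \<forall>a2\<in>A2. \<forall>a3\<in>A3. 0 \<le> Q a1 a2 a3 x1 x2 x3) \<and>
        (\<Sum>a1\<in>A1. \<Sum>a2\<in>A2. \<Sum>a3\<in>A3. Q a1 a2 a3 x1 x2 x3) = 1)"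

definition no_signalling3 :: "nat set \<Rightarrow> nat set \<Rightarrow> nat set \<Rightarrow> nat set \<Rightarrow> nat set \<Rightarrow> nat set
     \<Rightarrow> box3 \<Rightarrow> bool" where
  "no_signalling3 X1 X2 X3 A1 A2 A3 Q \<longleftrightarrow>
     (\<forall>a2\<in>A2. \<forall>a3\<in>A3. \<forall>x1\<in>X1. \<forall>x1'\<in>X1. \<forall>x2\<in>X2. \<forall>x3\<in>X3.
        (\<Sum>a1\<in>A1. Q a1 a2 a3 x1 x2 x3) = (\<Sum>a1\<in>A1. Q a1 a2 a3 x1' x2 x3)) \<and>
     (\<forall>a1\<in>A1. \<forall>a3\<in>A3. \<forall>x1\<in>X1. \<forall>x2\<in>X2. \<forall>x2'\<in>X2. \<forall>x3\<in>X3.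
        (\<Sum>a2\<in>A2. Q a1 a2 a3 x1 x2 x3) = (\<Sum>a2\<in>A2. Q a1 a2 a3 x1 x2' x3)) \<and>
     (\<forall>a1\<in>A1. \<forall>a2\<in>A2. \<forall>x1\<in>X1. \<forall>x2\<in>X2. \<forall>x3\<in>X3. \<forall>x3'\<in>X3.
        (\<Sum>a3\<in>A3. Q a1 a2 a3 x1 x2 x3) = (\<Sum>a3\<in>A3. Q a1 a2 a3 x1 x2 x3'))"

definition ns_box3 :: "nat set \<Rightarrow> nat set \<Rightarrow> nat set \<Rightarrow> nat set \<Rightarrow> nat set \<Rightarrow> nat set
     \<Rightarrow> box3 \<Rightarrow> bool" where
  "ns_box3 X1 X2 X3 A1 A2 A3 Q \<longleftrightarrow>
     is_box3 X1 X2 X3 A1 A2 A3 Q \<and> no_signalling3 X1 X2 X3 A1 A2 A3 Q"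

definition GW :: "nat set \<Rightarrow> nat set \<Rightarrow> nat set \<Rightarrow> nat set \<Rightarrow> box2 \<Rightarrow> bool" where
  "GW X Y A B P \<longleftrightarrow> is_box2 X Y A B P \<and>
     (\<exists>PA PB.
        ns_box3 X X Y A A B PA \<and> ns_box3 X Y Y A B B PB \<and>
        (\<forall>a\<in>A. \<forall>a'\<in>A. \<forall>b\<in>B. \<forall>x\<in>X. \<forall>x'\<in>X. \<forall>y\<in>Y.
            PA a a' b x x' y = PA a' a b x' x y) \<and>
        (\<forall>a\<in>A. \<forall>b\<in>B. \<forall>b'\<in>B. \<forall>x\<in>X. \<forall>y\<in>Y. \<forall>y'\<in>Y.
            PB a b b' x y y' = PB a b' b x y' y) \<and>
        (\<forall>a\<in>A. \<forall>b\<in>B. \<forall>x\<in>X. \<forall>y\<in>Y. \<forall>x'\<in>X. \<forall>y'\<in>Y.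
            P a b x y = (\<Sum>a'\<in>A. PA a a' b x x' y) \<and>
            P a b x y = (\<Sum>b'\<in>B. PB a b b' x y y')))"

text \<open>A history is a list of (box index, input, output) triples. A deterministic
wiring consists of a selection function (effective input, history) \<mapsto> (box, input)
and an output function (effective input, full history) \<mapsto> effective output.\<close>
type_synonym hist = "(nat \<times> nat \<times> nat) list"
type_synonym wiring = "(nat \<Rightarrow> hist \<Rightarrow> nat \<times> nat) \<times> (nat \<Rightarrow> hist \<Rightarrow> nat)"

text \<open>History after k steps on effective input x, when box i answers with out i.\<close>
fun run :: "wiring \<Rightarrow> nat \<Rightarrow> (nat \<Rightarrow> nat) \<Rightarrow> nat \<Rightarrow> hist" where
  "run W x out 0 = []"
| "run W x out (Suc k) =
     (let h = run W x out k; (i, u) = fst W x h in h @ [(i, u, out i)])"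

definition valid_wiring :: "nat \<Rightarrow> (nat \<Rightarrow> nat set) \<Rightarrow> (nat \<Rightarrow> nat set) \<Rightarrow> nat set \<Rightarrow> nat set
     \<Rightarrow> wiring \<Rightarrow> bool" where
  "valid_wiring n Xs As X' A' W \<longleftrightarrow>
     (\<forall>x\<in>X'. \<forall>out\<in>PiE {..<n} As.
        (\<forall>k<n. let h = run W x out k; (i, u) = fst W x h in
            i < n \<and> i \<notin> set (map fst h) \<and> u \<in> Xs i) \<and>
        snd W x (run W x out n) \<in> A')"

definition input_of :: "hist \<Rightarrow> nat \<Rightarrow> nat" where
  "input_of h i = (case find (\<lambda>(j, _, _). j = i) h of Some (_, u, _) \<Rightarrow> u | None \<Rightarrow> undefined)"

definition wired :: "nat \<Rightarrow> (nat \<Rightarrow> nat set) \<Rightarrow> (nat \<Rightarrow> nat set) \<Rightarrow> (nat \<Rightarrow> box2)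
     \<Rightarrow> wiring \<Rightarrow> wiring \<Rightarrow> box2" where
  "wired n As Bs Ps WA WB a' b' x' y' =
     (\<Sum>\<alpha>\<in>PiE {..<n} As. \<Sum>\<beta>\<in>PiE {..<n} Bs.
        let hA = run WA x' \<alpha> n; hB = run WB y' \<beta> n in
        (if snd WA x' hA = a' \<and> snd WB y' hB = b'
         then (\<Prod>i<n. Ps i (\<alpha> i) (\<beta> i) (input_of hA i) (input_of hB i)) else 0))"

end

theory Submission imports Defs begin

fun rs :: "(hist \<Rightarrow> nat \<times> nat) \<Rightarrow> (nat \<Rightarrow> nat) \<Rightarrow> nat \<Rightarrow> hist" where
  "rs s out 0 = []"
| "rs s out (Suc k) = rs s out k @ [(fst (s (rs s out k)), snd (s (rs s out k)), out (fst (s (rs s out k))))]"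

lemma run_rs: "run W x out k = rs (fst W x) out k"
  by (induction k) (simp_all add: Let_def split_beta)

lemma rs_first:
  "rs s out (Suc j) = (fst (s []), snd (s []), out (fst (s []))) #
     rs (\<lambda>h. s ((fst (s []), snd (s []), out (fst (s [])))#h)) out j"
  by (induction j) simp_all

lemma rs_upd:
  "(\<forall>j'<j. fst (s (rs s out j')) \<noteq> i0) \<Longrightarrow> rs s (out(i0:=z)) j = rs s out j"
  by (induction j) auto

lemma input_of_Cons_same: "input_of ((i,u,ob)#h) i = u"
  by (simp add: input_of_def)

lemma input_of_Cons_other: "j \<noteq> i \<Longrightarrow> input_of ((i,u,ob)#h) j = input_of h j"
  by (simp add: input_of_def)

definition vld :: "nat set \<Rightarrow> (nat \<Rightarrow> nat set) \<Rightarrow> (nat \<Rightarrow> nat set) \<Rightarrow> nat \<Rightarrow> (hist \<Rightarrow> nat \<times> nat) \<Rightarrow> bool" where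
  "vld I Xs As k s \<longleftrightarrow> (\<forall>out\<in>PiE I As. \<forall>j<k. fst (s (rs s out j)) \<in> I \<and>
      fst (s (rs s out j)) \<notin> fst ` set (rs s out j) \<and> snd (s (rs s out j)) \<in> Xs (fst (s (rs s out j))))"

lemma vld_sub:
  assumes v: "vld I Xs As (Suc k) s" and ob: "ob \<in> As (fst (s []))" and i0: "fst (s []) \<in> I"
  defines "s' \<equiv> \<lambda>h. s ((fst (s []), snd (s []), ob)#h)"
  shows "vld (I - {fst (s [])}) Xs As k s'"
    and "\<And>\<alpha>'. \<alpha>' \<in> PiE (I - {fst (s [])}) As \<Longrightarrow> j \<le> k \<Longrightarrow> rs s' (\<alpha>'(fst (s []) := ob)) j = rs s' \<alpha>' j"
proof -
  define i0 where "i0 = fst (s [])"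
  have key: "rs s' (\<alpha>'(i0 := ob)) j = rs s' \<alpha>' j \<and> (\<forall>j<k. fst (s' (rs s' \<alpha>' j)) \<in> I - {i0} \<and>
      fst (s' (rs s' \<alpha>' j)) \<notin> fst ` set (rs s' \<alpha>' j) \<and> snd (s' (rs s' \<alpha>' j)) \<in> Xs (fst (s' (rs s' \<alpha>' j))))"
    if a: "\<alpha>' \<in> PiE (I - {i0}) As" and jk: "j \<le> k" for \<alpha>' j
  proof -
    let ?\<alpha> = "\<alpha>'(i0 := ob)"
    have aI: "?\<alpha> \<in> PiE I As" using a ob i0 unfolding i0_def
      by (auto simp: PiE_def extensional_def)
    have first: "rs s ?\<alpha> (Suc j) = (i0, snd (s []), ob) # rs s' ?\<alpha> j" for j
      using rs_first[of s ?\<alpha> j] unfolding s'_def i0_def by simp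
    have st: "fst (s' (rs s' ?\<alpha> j)) \<in> I - {i0} \<and>
      fst (s' (rs s' ?\<alpha> j)) \<notin> fst ` set (rs s' ?\<alpha> j) \<and> snd (s' (rs s' ?\<alpha> j)) \<in> Xs (fst (s' (rs s' ?\<alpha> j)))"
      if "j < k" for j
    proof -
      have "Suc j < Suc k" using that by simp
      with v aI have "fst (s (rs s ?\<alpha> (Suc j))) \<in> I \<and>
      fst (s (rs s ?\<alpha> (Suc j))) \<notin> fst ` set (rs s ?\<alpha> (Suc j)) \<and> snd (s (rs s ?\<alpha> (Suc j))) \<in> Xs (fst (s (rs s ?\<alpha> (Suc j))))"
        unfolding vld_def by blast
      then show ?thesis unfolding first by (auto simp: s'_def i0_def)
    qed
    have eq: "rs s' (?\<alpha>(i0 := \<alpha>' i0)) j = rs s' ?\<alpha> j" if "j \<le> k" for j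
      by (rule rs_upd) (use st that in auto)
    have "?\<alpha>(i0 := \<alpha>' i0) = \<alpha>'" by simp
    with eq have eq': "j \<le> k \<Longrightarrow> rs s' \<alpha>' j = rs s' ?\<alpha> j" for j by simp
    show ?thesis using eq'[OF jk] st eq' by auto
  qed
  show "vld (I - {fst (s [])}) Xs As k s'" using key unfolding vld_def i0_def by blast
  show "\<And>\<alpha>'. \<alpha>' \<in> PiE (I - {fst (s [])}) As \<Longrightarrow> j \<le> k \<Longrightarrow> rs s' (\<alpha>'(fst (s []) := ob)) j = rs s' \<alpha>' j"
    using key unfolding i0_def by blast
qed


lemma sum_PiE_insert:
  fixes F :: "(nat \<Rightarrow> nat) \<Rightarrow> real"
  assumes "i0 \<notin> I'"
  shows "(\<Sum>\<alpha>\<in>PiE (insert i0 I') As. F \<alpha>) = (\<Sum>ob\<in>As i0. \<Sum>\<alpha>'\<in>PiE I' As. F (\<alpha>'(i0 := ob)))"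
proof -
  have "(\<Sum>\<alpha>\<in>PiE (insert i0 I') As. F \<alpha>) = (\<Sum>p\<in>As i0 \<times> PiE I' As. F ((snd p)(i0 := fst p)))"
    unfolding PiE_insert_eq
    by (subst sum.reindex[OF inj_combinator[OF assms]]) (simp add: split_beta)
  also have "\<dots> = (\<Sum>ob\<in>As i0. \<Sum>\<alpha>'\<in>PiE I' As. F (\<alpha>'(i0 := ob)))"
    unfolding sum.cartesian_product by (simp add: split_beta)
  finally show ?thesis .
qed

lemma core:
  fixes f :: "nat \<Rightarrow> nat \<Rightarrow> nat \<Rightarrow> real"
  assumes "finite I" "card I = k" "\<forall>i\<in>I. As i \<noteq> {}" "vld I Xs As k s"
    "\<forall>i\<in>I. \<forall>u\<in>Xs i. (\<Sum>ob\<in>As i. f i ob u) = c i"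
  shows "(\<Sum>\<alpha>\<in>PiE I As. \<Prod>i\<in>I. f i (\<alpha> i) (input_of (rs s \<alpha> k) i)) = (\<Prod>i\<in>I. c i)
    \<and> (\<forall>\<alpha>\<in>PiE I As. \<forall>i\<in>I. input_of (rs s \<alpha> k) i \<in> Xs i)"
  using assms
proof (induction k arbitrary: I s f c)
  case 0
  then show ?case by simp
next
  case (Suc k)
  then have "I \<noteq> {}" by auto
  have "PiE I As \<noteq> {}" using Suc.prems(3) by (simp add: PiE_eq_empty_iff)
  then obtain out0 where out0: "out0 \<in> PiE I As" by blast
  define i0 where "i0 = fst (s [])"
  define u0 where "u0 = snd (s [])"
  have "fst (s (rs s out0 0)) \<in> I \<and> snd (s (rs s out0 0)) \<in> Xs (fst (s (rs s out0 0)))"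
    using Suc.prems(4) out0 unfolding vld_def by blast
  then have i0I: "i0 \<in> I" and u0X: "u0 \<in> Xs i0" unfolding i0_def u0_def by simp_all
  define I' where "I' = I - {i0}"
  have II': "I = insert i0 I'" "i0 \<notin> I'" using i0I I'_def by auto
  have fI': "finite I'" "card I' = k" using Suc.prems(1,2) i0I I'_def by auto
  define s' where "s' = (\<lambda>ob h. s ((i0, u0, ob)#h))"
  have vs: "vld I' Xs As k (s' ob)" and eqs: "\<And>\<alpha>'. \<alpha>' \<in> PiE I' As \<Longrightarrow> rs (s' ob) (\<alpha>'(i0 := ob)) k = rs (s' ob) \<alpha>' k"
    if "ob \<in> As i0" for ob
  proof -
    have e: "s' ob = (\<lambda>h. s ((fst (s []), snd (s []), ob)#h))" "I' = I - {fst (s [])}"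
      unfolding s'_def I'_def i0_def u0_def by simp_all
    show "vld I' Xs As k (s' ob)" unfolding e
      by (rule vld_sub(1)[OF Suc.prems(4)]) (use that i0I i0_def in simp_all)
    show "\<And>\<alpha>'. \<alpha>' \<in> PiE I' As \<Longrightarrow> rs (s' ob) (\<alpha>'(i0 := ob)) k = rs (s' ob) \<alpha>' k"
      unfolding e i0_def
      by (rule vld_sub(2)[OF Suc.prems(4)]) (use that i0I i0_def in simp_all)
  qed
  have first: "rs s \<alpha> (Suc k) = (i0, u0, \<alpha> i0) # rs (s' (\<alpha> i0)) \<alpha> k" for \<alpha>
    using rs_first[of s \<alpha> k] unfolding s'_def i0_def u0_def by simp
  have IH: "(\<Sum>\<alpha>\<in>PiE I' As. \<Prod>i\<in>I'. f i (\<alpha> i) (input_of (rs (s' ob) \<alpha> k) i)) = (\<Prod>i\<in>I'. c i)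
    \<and> (\<forall>\<alpha>\<in>PiE I' As. \<forall>i\<in>I'. input_of (rs (s' ob) \<alpha> k) i \<in> Xs i)" if "ob \<in> As i0" for ob
    using Suc.IH[OF fI' _ vs[OF that], of f c] Suc.prems(3,5) II' by auto
  have "(\<Sum>\<alpha>\<in>PiE I As. \<Prod>i\<in>I. f i (\<alpha> i) (input_of (rs s \<alpha> (Suc k)) i))
     = (\<Sum>ob\<in>As i0. \<Sum>\<alpha>'\<in>PiE I' As. \<Prod>i\<in>I. f i ((\<alpha>'(i0:=ob)) i) (input_of (rs s (\<alpha>'(i0:=ob)) (Suc k)) i))"
    unfolding II' by (rule sum_PiE_insert[OF II'(2)])
  also have "\<dots> = (\<Sum>ob\<in>As i0. \<Sum>\<alpha>'\<in>PiE I' As. f i0 ob u0 * (\<Prod>i\<in>I'. f i (\<alpha>' i) (input_of (rs (s' ob) \<alpha>' k) i)))"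
  proof (intro sum.cong refl)
    fix ob \<alpha>' assume ob: "ob \<in> As i0" and a: "\<alpha>' \<in> PiE I' As"
    have r: "rs s (\<alpha>'(i0:=ob)) (Suc k) = (i0, u0, ob) # rs (s' ob) \<alpha>' k"
      using first[of "\<alpha>'(i0:=ob)"] eqs[OF ob a] by simp
    show "(\<Prod>i\<in>I. f i ((\<alpha>'(i0:=ob)) i) (input_of (rs s (\<alpha>'(i0:=ob)) (Suc k)) i)) =
       f i0 ob u0 * (\<Prod>i\<in>I'. f i (\<alpha>' i) (input_of (rs (s' ob) \<alpha>' k) i))"
      unfolding r II'(1) using II'(2) fI'(1)
      by (auto simp: input_of_Cons_same input_of_Cons_other intro!: prod.cong)
  qed
  also have "\<dots> = (\<Sum>ob\<in>As i0. f i0 ob u0 * (\<Prod>i\<in>I'. c i))"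
    by (intro sum.cong refl) (simp add: sum_distrib_left[symmetric] IH)
  also have "\<dots> = c i0 * (\<Prod>i\<in>I'. c i)"
    using Suc.prems(5) i0I u0X by (simp add: sum_distrib_right[symmetric])
  also have "\<dots> = (\<Prod>i\<in>I. c i)" unfolding II'(1) using II'(2) fI'(1) by simp
  finally have A: "(\<Sum>\<alpha>\<in>PiE I As. \<Prod>i\<in>I. f i (\<alpha> i) (input_of (rs s \<alpha> (Suc k)) i)) = (\<Prod>i\<in>I. c i)" .
  have B: "input_of (rs s \<alpha> (Suc k)) i \<in> Xs i" if a: "\<alpha> \<in> PiE I As" and i: "i \<in> I" for \<alpha> i
  proof -
    define \<alpha>' where "\<alpha>' = \<alpha>(i0 := undefined)"
    have a': "\<alpha>' \<in> PiE I' As" using a unfolding \<alpha>'_def I'_def by (auto simp: PiE_def extensional_def)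
    have ob: "\<alpha> i0 \<in> As i0" using a i0I by auto
    have "\<alpha> = \<alpha>'(i0 := \<alpha> i0)" unfolding \<alpha>'_def by simp
    then have r: "rs s \<alpha> (Suc k) = (i0, u0, \<alpha> i0) # rs (s' (\<alpha> i0)) \<alpha>' k"
      using first[of \<alpha>] eqs[OF ob a'] by metis
    show ?thesis
    proof (cases "i = i0")
      case True then show ?thesis using r u0X by (simp add: input_of_Cons_same)
    next
      case False
      then have "i \<in> I'" using i I'_def by auto
      then show ?thesis using r False IH[OF ob] a' by (simp add: input_of_Cons_other)
    qed
  qed
  show ?case using A B by blast
qed


lemma valid_vld:
  assumes "valid_wiring n Xs As X' A' W" "x \<in> X'"
  shows "vld {..<n} Xs As n (fst W x)"
  using assms unfolding valid_wiring_def vld_def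
  by (auto simp: Let_def split_beta run_rs[symmetric])

lemma wcore:
  fixes f :: "nat \<Rightarrow> nat \<Rightarrow> nat \<Rightarrow> real"
  assumes "valid_wiring n Xs As X' A' W" "x \<in> X'" "\<forall>i<n. As i \<noteq> {}"
    "\<forall>i<n. \<forall>u\<in>Xs i. (\<Sum>ob\<in>As i. f i ob u) = c i"
  shows "(\<Sum>\<alpha>\<in>PiE {..<n} As. \<Prod>i<n. f i (\<alpha> i) (input_of (run W x \<alpha> n) i)) = (\<Prod>i<n. c i)"
  using core[of "{..<n}" n As Xs "fst W x" f c] valid_vld[OF assms(1,2)] assms(3,4)
  by (simp add: run_rs)

lemma wdom:
  assumes "valid_wiring n Xs As X' A' W" "x \<in> X'" "\<forall>i<n. As i \<noteq> {}"
    "\<alpha> \<in> PiE {..<n} As" "i < n"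
  shows "input_of (run W x \<alpha> n) i \<in> Xs i"
  using core[of "{..<n}" n As Xs "fst W x" "\<lambda>_ _ _. 0" "\<lambda>_. 0"] valid_vld[OF assms(1,2)] assms(3-5)
  by (simp add: run_rs)

lemma wout:
  assumes "valid_wiring n Xs As X' A' W" "x \<in> X'" "\<alpha> \<in> PiE {..<n} As"
  shows "snd W x (run W x \<alpha> n) \<in> A'"
  using assms unfolding valid_wiring_def by blast

definition wired3 :: "nat \<Rightarrow> (nat\<Rightarrow>nat set) \<Rightarrow> (nat\<Rightarrow>nat set) \<Rightarrow> (nat\<Rightarrow>nat set) \<Rightarrow> (nat \<Rightarrow> box3)
   \<Rightarrow> wiring \<Rightarrow> wiring \<Rightarrow> wiring \<Rightarrow> box3" where
 "wired3 n A1s A2s A3s Qs W1 W2 W3 a1 a2 a3 x1 x2 x3 =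
   (\<Sum>\<alpha>1\<in>PiE {..<n} A1s. \<Sum>\<alpha>2\<in>PiE {..<n} A2s. \<Sum>\<alpha>3\<in>PiE {..<n} A3s.
   if snd W1 x1 (run W1 x1 \<alpha>1 n) = a1 \<and> snd W2 x2 (run W2 x2 \<alpha>2 n) = a2 \<and> snd W3 x3 (run W3 x3 \<alpha>3 n) = a3
   then (\<Prod>i<n. Qs i (\<alpha>1 i) (\<alpha>2 i) (\<alpha>3 i) (input_of (run W1 x1 \<alpha>1 n) i)
      (input_of (run W2 x2 \<alpha>2 n) i) (input_of (run W3 x3 \<alpha>3 n) i)) else 0)"

lemma swap12:
  "wired3 n A1s A2s A3s Qs W1 W2 W3 a1 a2 a3 x1 x2 x3 =
   wired3 n A2s A1s A3s (\<lambda>i b1 b2 b3 y1 y2 y3. Qs i b2 b1 b3 y2 y1 y3) W2 W1 W3 a2 a1 a3 x2 x1 x3"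
  unfolding wired3_def by (subst sum.swap) (simp add: conj_ac)

lemma swap23:
  "wired3 n A1s A2s A3s Qs W1 W2 W3 a1 a2 a3 x1 x2 x3 =
   wired3 n A1s A3s A2s (\<lambda>i b1 b2 b3 y1 y2 y3. Qs i b1 b3 b2 y1 y3 y2) W1 W3 W2 a1 a3 a2 x1 x3 x2"
  unfolding wired3_def by (rule sum.cong[OF refl], subst sum.swap) (simp add: conj_ac)

lemma swap13:
  "wired3 n A1s A2s A3s Qs W1 W2 W3 a1 a2 a3 x1 x2 x3 =
   wired3 n A3s A2s A1s (\<lambda>i b1 b2 b3 y1 y2 y3. Qs i b3 b2 b1 y3 y2 y1) W3 W2 W1 a3 a2 a1 x3 x2 x1"
  by (subst swap12, subst swap23, subst swap12) simp


lemma collapse: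
  fixes t :: real
  assumes "finite A" "v \<in> A"
  shows "(\<Sum>a\<in>A. if P \<and> v = a then t else 0) = (if P then t else 0)"
  using assms by (cases P) simp_all

lemma sum_if_const:
  fixes f :: "'a \<Rightarrow> real"
  shows "(\<Sum>x\<in>S. if b then f x else 0) = (if b then sum f S else 0)"
  by (cases b) simp_all

lemma M3:
  assumes v1: "valid_wiring n X1s A1s X1' A1' W1" and v2: "valid_wiring n X2s A2s X2' A2' W2"
    and v3: "valid_wiring n X3s A3s X3' A3' W3"
    and x: "x1 \<in> X1'" "x2 \<in> X2'" "x3 \<in> X3'"
    and ne: "\<forall>i<n. A1s i \<noteq> {} \<and> A2s i \<noteq> {} \<and> A3s i \<noteq> {}" and fin: "finite A3'"
    and mar: "\<forall>i<n. \<forall>b1\<in>A1s i. \<forall>b2\<in>A2s i. \<forall>u1\<in>X1s i. \<forall>u2\<in>X2s i. \<forall>u3\<in>X3s i.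
       (\<Sum>b3\<in>A3s i. Qs i b1 b2 b3 u1 u2 u3) = Rs i b1 b2 u1 u2"
  shows "(\<Sum>a3\<in>A3'. wired3 n A1s A2s A3s Qs W1 W2 W3 a1 a2 a3 x1 x2 x3) = wired n A1s A2s Rs W1 W2 a1 a2 x1 x2"
proof -
  let ?c = "\<lambda>\<alpha>1 \<alpha>2. snd W1 x1 (run W1 x1 \<alpha>1 n) = a1 \<and> snd W2 x2 (run W2 x2 \<alpha>2 n) = a2"
  let ?P = "\<lambda>\<alpha>1 \<alpha>2 \<alpha>3. (\<Prod>i<n. Qs i (\<alpha>1 i) (\<alpha>2 i) (\<alpha>3 i) (input_of (run W1 x1 \<alpha>1 n) i)
      (input_of (run W2 x2 \<alpha>2 n) i) (input_of (run W3 x3 \<alpha>3 n) i))"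
  have "(\<Sum>a3\<in>A3'. wired3 n A1s A2s A3s Qs W1 W2 W3 a1 a2 a3 x1 x2 x3) =
    (\<Sum>\<alpha>1\<in>PiE {..<n} A1s. \<Sum>\<alpha>2\<in>PiE {..<n} A2s. \<Sum>\<alpha>3\<in>PiE {..<n} A3s. \<Sum>a3\<in>A3'.
      if ?c \<alpha>1 \<alpha>2 \<and> snd W3 x3 (run W3 x3 \<alpha>3 n) = a3 then ?P \<alpha>1 \<alpha>2 \<alpha>3 else 0)"
    unfolding wired3_def
    apply (rule trans[OF sum.swap], rule sum.cong[OF refl])
    apply (rule trans[OF sum.swap], rule sum.cong[OF refl])
    apply (rule trans[OF sum.swap], rule sum.cong[OF refl])
    by (simp add: conj_assoc)
  also have "\<dots> = (\<Sum>\<alpha>1\<in>PiE {..<n} A1s. \<Sum>\<alpha>2\<in>PiE {..<n} A2s. \<Sum>\<alpha>3\<in>PiE {..<n} A3s.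
      if ?c \<alpha>1 \<alpha>2 then ?P \<alpha>1 \<alpha>2 \<alpha>3 else 0)"
    by (intro sum.cong refl collapse fin wout[OF v3 x(3)])
  also have "\<dots> = (\<Sum>\<alpha>1\<in>PiE {..<n} A1s. \<Sum>\<alpha>2\<in>PiE {..<n} A2s.
      if ?c \<alpha>1 \<alpha>2 then (\<Sum>\<alpha>3\<in>PiE {..<n} A3s. ?P \<alpha>1 \<alpha>2 \<alpha>3) else 0)"
    by (intro sum.cong refl sum_if_const)
  also have "\<dots> = (\<Sum>\<alpha>1\<in>PiE {..<n} A1s. \<Sum>\<alpha>2\<in>PiE {..<n} A2s.
      if ?c \<alpha>1 \<alpha>2 then (\<Prod>i<n. Rs i (\<alpha>1 i) (\<alpha>2 i) (input_of (run W1 x1 \<alpha>1 n) i)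
      (input_of (run W2 x2 \<alpha>2 n) i)) else 0)"
  proof (intro sum.cong refl if_cong)
    fix \<alpha>1 \<alpha>2 assume a1: "\<alpha>1 \<in> PiE {..<n} A1s" and a2: "\<alpha>2 \<in> PiE {..<n} A2s"
    show "(\<Sum>\<alpha>3\<in>PiE {..<n} A3s. ?P \<alpha>1 \<alpha>2 \<alpha>3) = (\<Prod>i<n. Rs i (\<alpha>1 i) (\<alpha>2 i) (input_of (run W1 x1 \<alpha>1 n) i)
      (input_of (run W2 x2 \<alpha>2 n) i))"
      apply (rule wcore[OF v3 x(3)])
      using ne apply blast
    proof (intro allI impI ballI)
      fix i u assume i: "i < n" and u: "u \<in> X3s i"
      have "\<alpha>1 i \<in> A1s i" "\<alpha>2 i \<in> A2s i" using a1 a2 i by auto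
      then show "(\<Sum>ob\<in>A3s i. Qs i (\<alpha>1 i) (\<alpha>2 i) ob (input_of (run W1 x1 \<alpha>1 n) i)
                  (input_of (run W2 x2 \<alpha>2 n) i) u) = Rs i (\<alpha>1 i) (\<alpha>2 i) (input_of (run W1 x1 \<alpha>1 n) i)
               (input_of (run W2 x2 \<alpha>2 n) i)"
        using mar wdom[OF v1 x(1) _ a1] wdom[OF v2 x(2) _ a2] ne i u by auto
    qed
  qed
  also have "\<dots> = wired n A1s A2s Rs W1 W2 a1 a2 x1 x2"
    unfolding wired_def Let_def by simp
  finally show ?thesis .
qed

lemma wired3_cong:
  assumes v1: "valid_wiring n X1s A1s X1' A1' W1" and v2: "valid_wiring n X2s A2s X2' A2' W2"
    and v3: "valid_wiring n X3s A3s X3' A3' W3"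
    and x: "x1 \<in> X1'" "x2 \<in> X2'" "x3 \<in> X3'"
    and ne: "\<forall>i<n. A1s i \<noteq> {} \<and> A2s i \<noteq> {} \<and> A3s i \<noteq> {}"
    and eq: "\<forall>i<n. \<forall>b1\<in>A1s i. \<forall>b2\<in>A2s i. \<forall>b3\<in>A3s i. \<forall>u1\<in>X1s i. \<forall>u2\<in>X2s i. \<forall>u3\<in>X3s i.
       Qs i b1 b2 b3 u1 u2 u3 = Qs' i b1 b2 b3 u1 u2 u3"
  shows "wired3 n A1s A2s A3s Qs W1 W2 W3 a1 a2 a3 x1 x2 x3 = wired3 n A1s A2s A3s Qs' W1 W2 W3 a1 a2 a3 x1 x2 x3"
  unfolding wired3_def
proof (intro sum.cong refl if_cong prod.cong)
  fix \<alpha>1 \<alpha>2 \<alpha>3 i assume a1: "\<alpha>1 \<in> PiE {..<n} A1s" and a2: "\<alpha>2 \<in> PiE {..<n} A2s"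
    and a3: "\<alpha>3 \<in> PiE {..<n} A3s" and i: "i \<in> {..<n}"
  then show "Qs i (\<alpha>1 i) (\<alpha>2 i) (\<alpha>3 i) (input_of (run W1 x1 \<alpha>1 n) i) (input_of (run W2 x2 \<alpha>2 n) i) (input_of (run W3 x3 \<alpha>3 n) i) =
       Qs' i (\<alpha>1 i) (\<alpha>2 i) (\<alpha>3 i) (input_of (run W1 x1 \<alpha>1 n) i) (input_of (run W2 x2 \<alpha>2 n) i) (input_of (run W3 x3 \<alpha>3 n) i)"
  proof -
    have "\<alpha>1 i \<in> A1s i" "\<alpha>2 i \<in> A2s i" "\<alpha>3 i \<in> A3s i" using a1 a2 a3 i by auto
    then show ?thesis
      using eq wdom[OF v1 x(1) _ a1] wdom[OF v2 x(2) _ a2] wdom[OF v3 x(3) _ a3] ne i by auto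
  qed
qed


lemma collapse2:
  fixes t :: real
  assumes "finite A" "finite B" "v \<in> A" "w \<in> B"
  shows "(\<Sum>a\<in>A. \<Sum>b\<in>B. if v = a \<and> w = b then t else 0) = t"
proof -
  have "(\<Sum>a\<in>A. \<Sum>b\<in>B. if v = a \<and> w = b then t else 0) = (\<Sum>a\<in>A. if v = a then t else 0)"
    by (intro sum.cong refl) (use collapse[OF assms(2,4), of "v = _" t] in simp)
  also have "\<dots> = t" using assms by simp
  finally show ?thesis .
qed

lemma norm2:
  assumes v1: "valid_wiring n X1s A1s X1' A1' W1" and v2: "valid_wiring n X2s A2s X2' A2' W2"
    and x: "x1 \<in> X1'" "x2 \<in> X2'"
    and ne: "\<forall>i<n. A1s i \<noteq> {} \<and> A2s i \<noteq> {}" and fin: "finite A1'" "finite A2'"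
    and m2: "\<forall>i<n. \<forall>b1\<in>A1s i. \<forall>u1\<in>X1s i. \<forall>u2\<in>X2s i. (\<Sum>b2\<in>A2s i. Rs i b1 b2 u1 u2) = Ss i b1 u1"
    and m1: "\<forall>i<n. \<forall>u1\<in>X1s i. (\<Sum>b1\<in>A1s i. Ss i b1 u1) = 1"
  shows "(\<Sum>a1\<in>A1'. \<Sum>a2\<in>A2'. wired n A1s A2s Rs W1 W2 a1 a2 x1 x2) = 1"
proof -
  let ?P = "\<lambda>\<alpha>1 \<alpha>2. (\<Prod>i<n. Rs i (\<alpha>1 i) (\<alpha>2 i) (input_of (run W1 x1 \<alpha>1 n) i) (input_of (run W2 x2 \<alpha>2 n) i))"
  let ?F = "\<lambda>a1 a2 \<alpha>1 \<alpha>2. if snd W1 x1 (run W1 x1 \<alpha>1 n) = a1 \<and> snd W2 x2 (run W2 x2 \<alpha>2 n) = a2 then ?P \<alpha>1 \<alpha>2 else 0"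
  have "(\<Sum>a1\<in>A1'. \<Sum>a2\<in>A2'. wired n A1s A2s Rs W1 W2 a1 a2 x1 x2)
     = (\<Sum>a1\<in>A1'. \<Sum>a2\<in>A2'. \<Sum>\<alpha>1\<in>PiE {..<n} A1s. \<Sum>\<alpha>2\<in>PiE {..<n} A2s. ?F a1 a2 \<alpha>1 \<alpha>2)"
    unfolding wired_def Let_def by simp
  also have "\<dots> = (\<Sum>a1\<in>A1'. \<Sum>\<alpha>1\<in>PiE {..<n} A1s. \<Sum>a2\<in>A2'. \<Sum>\<alpha>2\<in>PiE {..<n} A2s. ?F a1 a2 \<alpha>1 \<alpha>2)"
    by (rule sum.cong[OF refl], rule sum.swap)
  also have "\<dots> = (\<Sum>a1\<in>A1'. \<Sum>\<alpha>1\<in>PiE {..<n} A1s. \<Sum>\<alpha>2\<in>PiE {..<n} A2s. \<Sum>a2\<in>A2'. ?F a1 a2 \<alpha>1 \<alpha>2)"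
    apply (rule sum.cong[OF refl]) apply (rule sum.cong[OF refl]) by (rule sum.swap)
  also have "\<dots> = (\<Sum>\<alpha>1\<in>PiE {..<n} A1s. \<Sum>a1\<in>A1'. \<Sum>\<alpha>2\<in>PiE {..<n} A2s. \<Sum>a2\<in>A2'. ?F a1 a2 \<alpha>1 \<alpha>2)"
    by (rule sum.swap)
  also have "\<dots> = (\<Sum>\<alpha>1\<in>PiE {..<n} A1s. \<Sum>\<alpha>2\<in>PiE {..<n} A2s. \<Sum>a1\<in>A1'. \<Sum>a2\<in>A2'. ?F a1 a2 \<alpha>1 \<alpha>2)"
    by (rule sum.cong[OF refl], rule sum.swap)
  also have "\<dots> = (\<Sum>\<alpha>1\<in>PiE {..<n} A1s. \<Sum>\<alpha>2\<in>PiE {..<n} A2s. ?P \<alpha>1 \<alpha>2)"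
    by (intro sum.cong refl collapse2 fin wout[OF v1 x(1)] wout[OF v2 x(2)])
  also have "\<dots> = (\<Sum>\<alpha>1\<in>PiE {..<n} A1s. \<Prod>i<n. Ss i (\<alpha>1 i) (input_of (run W1 x1 \<alpha>1 n) i))"
  proof (intro sum.cong refl)
    fix \<alpha>1 assume a1: "\<alpha>1 \<in> PiE {..<n} A1s"
    show "(\<Sum>\<alpha>2\<in>PiE {..<n} A2s. ?P \<alpha>1 \<alpha>2) = (\<Prod>i<n. Ss i (\<alpha>1 i) (input_of (run W1 x1 \<alpha>1 n) i))"
      apply (rule wcore[OF v2 x(2)])
      using ne apply blast
    proof (intro allI impI ballI)
      fix i u assume i: "i < n" and u: "u \<in> X2s i"
      have "\<alpha>1 i \<in> A1s i" using a1 i by auto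
      then show "(\<Sum>ob\<in>A2s i. Rs i (\<alpha>1 i) ob (input_of (run W1 x1 \<alpha>1 n) i) u) = Ss i (\<alpha>1 i) (input_of (run W1 x1 \<alpha>1 n) i)"
        using m2 wdom[OF v1 x(1) _ a1] ne i u by auto
    qed
  qed
  also have "\<dots> = (\<Prod>i<n. 1)"
    apply (rule wcore[OF v1 x(1)]) using ne m1 by auto
  finally show ?thesis by simp
qed


lemma ns_nn: "ns_box3 X1 X2 X3 A1 A2 A3 Q \<Longrightarrow> x1 \<in> X1 \<Longrightarrow> x2 \<in> X2 \<Longrightarrow> x3 \<in> X3 \<Longrightarrow>
   a1 \<in> A1 \<Longrightarrow> a2 \<in> A2 \<Longrightarrow> a3 \<in> A3 \<Longrightarrow> 0 \<le> Q a1 a2 a3 x1 x2 x3"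
  unfolding ns_box3_def is_box3_def by blast
lemma ns_tot: "ns_box3 X1 X2 X3 A1 A2 A3 Q \<Longrightarrow> x1 \<in> X1 \<Longrightarrow> x2 \<in> X2 \<Longrightarrow> x3 \<in> X3 \<Longrightarrow>
   (\<Sum>a1\<in>A1. \<Sum>a2\<in>A2. \<Sum>a3\<in>A3. Q a1 a2 a3 x1 x2 x3) = 1"
  unfolding ns_box3_def is_box3_def by blast
lemma ns_1: "ns_box3 X1 X2 X3 A1 A2 A3 Q \<Longrightarrow> a2 \<in> A2 \<Longrightarrow> a3 \<in> A3 \<Longrightarrow> x1 \<in> X1 \<Longrightarrow> x1' \<in> X1 \<Longrightarrow> x2 \<in> X2 \<Longrightarrow> x3 \<in> X3 \<Longrightarrow>
   (\<Sum>a1\<in>A1. Q a1 a2 a3 x1 x2 x3) = (\<Sum>a1\<in>A1. Q a1 a2 a3 x1' x2 x3)"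
  unfolding ns_box3_def no_signalling3_def by blast
lemma ns_2: "ns_box3 X1 X2 X3 A1 A2 A3 Q \<Longrightarrow> a1 \<in> A1 \<Longrightarrow> a3 \<in> A3 \<Longrightarrow> x1 \<in> X1 \<Longrightarrow> x2 \<in> X2 \<Longrightarrow> x2' \<in> X2 \<Longrightarrow> x3 \<in> X3 \<Longrightarrow>
   (\<Sum>a2\<in>A2. Q a1 a2 a3 x1 x2 x3) = (\<Sum>a2\<in>A2. Q a1 a2 a3 x1 x2' x3)"
  unfolding ns_box3_def no_signalling3_def by blast
lemma ns_3: "ns_box3 X1 X2 X3 A1 A2 A3 Q \<Longrightarrow> a1 \<in> A1 \<Longrightarrow> a2 \<in> A2 \<Longrightarrow> x1 \<in> X1 \<Longrightarrow> x2 \<in> X2 \<Longrightarrow> x3 \<in> X3 \<Longrightarrow> x3' \<in> X3 \<Longrightarrow>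
   (\<Sum>a3\<in>A3. Q a1 a2 a3 x1 x2 x3) = (\<Sum>a3\<in>A3. Q a1 a2 a3 x1 x2 x3')"
  unfolding ns_box3_def no_signalling3_def by blast

lemma wired3_ns:
  assumes v1: "valid_wiring n X1s A1s X1' A1' W1" and v2: "valid_wiring n X2s A2s X2' A2' W2"
    and v3: "valid_wiring n X3s A3s X3' A3' W3"
    and fin: "finite A1'" "finite A2'" "finite A3'"
    and ne: "\<forall>i<n. A1s i \<noteq> {} \<and> A2s i \<noteq> {} \<and> A3s i \<noteq> {} \<and> X1s i \<noteq> {} \<and> X2s i \<noteq> {} \<and> X3s i \<noteq> {}"
    and ns: "\<forall>i<n. ns_box3 (X1s i) (X2s i) (X3s i) (A1s i) (A2s i) (A3s i) (Qs i)"
  shows "ns_box3 X1' X2' X3' A1' A2' A3' (wired3 n A1s A2s A3s Qs W1 W2 W3)"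
proof -
  define x10 where "x10 i = (SOME x. x \<in> X1s i)" for i
  define x20 where "x20 i = (SOME x. x \<in> X2s i)" for i
  define x30 where "x30 i = (SOME x. x \<in> X3s i)" for i
  have x0: "x10 i \<in> X1s i" "x20 i \<in> X2s i" "x30 i \<in> X3s i" if "i < n" for i
    using ne that unfolding x10_def x20_def x30_def by (simp_all add: some_in_eq)
  have ne': "\<forall>i<n. A1s i \<noteq> {} \<and> A2s i \<noteq> {} \<and> A3s i \<noteq> {}" using ne by blast
  have nsi: "ns_box3 (X1s i) (X2s i) (X3s i) (A1s i) (A2s i) (A3s i) (Qs i)" if "i < n" for i
    using ns that by blast
  have nn: "\<forall>i<n. \<forall>b1\<in>A1s i. \<forall>b2\<in>A2s i. \<forall>b3\<in>A3s i. \<forall>u1\<in>X1s i. \<forall>u2\<in>X2s i. \<forall>u3\<in>X3s i.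
     0 \<le> Qs i b1 b2 b3 u1 u2 u3"
    using ns_nn[OF nsi] by blast
  have tot: "\<forall>i<n. \<forall>u1\<in>X1s i. \<forall>u2\<in>X2s i. \<forall>u3\<in>X3s i.
     (\<Sum>b1\<in>A1s i. \<Sum>b2\<in>A2s i. \<Sum>b3\<in>A3s i. Qs i b1 b2 b3 u1 u2 u3) = 1"
    using ns_tot[OF nsi] by blast
  have ns1: "\<forall>i<n. \<forall>b2\<in>A2s i. \<forall>b3\<in>A3s i. \<forall>u1\<in>X1s i. \<forall>u1'\<in>X1s i. \<forall>u2\<in>X2s i. \<forall>u3\<in>X3s i.
        (\<Sum>b1\<in>A1s i. Qs i b1 b2 b3 u1 u2 u3) = (\<Sum>b1\<in>A1s i. Qs i b1 b2 b3 u1' u2 u3)"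
    using ns_1[OF nsi] by blast
  have ns2: "\<forall>i<n. \<forall>b1\<in>A1s i. \<forall>b3\<in>A3s i. \<forall>u1\<in>X1s i. \<forall>u2\<in>X2s i. \<forall>u2'\<in>X2s i. \<forall>u3\<in>X3s i.
        (\<Sum>b2\<in>A2s i. Qs i b1 b2 b3 u1 u2 u3) = (\<Sum>b2\<in>A2s i. Qs i b1 b2 b3 u1 u2' u3)"
    using ns_2[OF nsi] by blast
  have ns3: "\<forall>i<n. \<forall>b1\<in>A1s i. \<forall>b2\<in>A2s i. \<forall>u1\<in>X1s i. \<forall>u2\<in>X2s i. \<forall>u3\<in>X3s i. \<forall>u3'\<in>X3s i.
        (\<Sum>b3\<in>A3s i. Qs i b1 b2 b3 u1 u2 u3) = (\<Sum>b3\<in>A3s i. Qs i b1 b2 b3 u1 u2 u3')"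
    using ns_3[OF nsi] by blast

  define R3 where "R3 i b1 b2 u1 u2 = (\<Sum>b3\<in>A3s i. Qs i b1 b2 b3 u1 u2 (x30 i))" for i b1 b2 u1 u2
  define R2 where "R2 i b1 b3 u1 u3 = (\<Sum>b2\<in>A2s i. Qs i b1 b2 b3 u1 (x20 i) u3)" for i b1 b3 u1 u3
  define R1 where "R1 i b3 b2 u3 u2 = (\<Sum>b1\<in>A1s i. Qs i b1 b2 b3 (x10 i) u2 u3)" for i b3 b2 u3 u2

  have M3a: "(\<Sum>a3\<in>A3'. wired3 n A1s A2s A3s Qs W1 W2 W3 a1 a2 a3 x1 x2 x3) = wired n A1s A2s R3 W1 W2 a1 a2 x1 x2"
    if "x1 \<in> X1'" "x2 \<in> X2'" "x3 \<in> X3'" for a1 a2 x1 x2 x3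
    by (rule M3[OF v1 v2 v3 that ne' fin(3)], unfold R3_def, intro allI impI ballI, rule ns_3[OF nsi], simp_all add: x0)
  have M2a: "(\<Sum>a2\<in>A2'. wired3 n A1s A2s A3s Qs W1 W2 W3 a1 a2 a3 x1 x2 x3) = wired n A1s A3s R2 W1 W3 a1 a3 x1 x3"
    if "x1 \<in> X1'" "x2 \<in> X2'" "x3 \<in> X3'" for a1 a3 x1 x2 x3
    apply (subst swap23)
    by (rule M3[OF v1 v3 v2 that(1,3,2)], use ne' in blast, rule fin, unfold R2_def, intro allI impI ballI, rule ns_2[OF nsi], simp_all add: x0)
  have M1a: "(\<Sum>a1\<in>A1'. wired3 n A1s A2s A3s Qs W1 W2 W3 a1 a2 a3 x1 x2 x3) = wired n A3s A2s R1 W3 W2 a3 a2 x3 x2"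
    if "x1 \<in> X1'" "x2 \<in> X2'" "x3 \<in> X3'" for a2 a3 x1 x2 x3
    apply (subst swap13)
    by (rule M3[OF v3 v2 v1 that(3,2,1)], use ne' in blast, rule fin, unfold R1_def, intro allI impI ballI, rule ns_1[OF nsi], simp_all add: x0)

  have nonneg: "0 \<le> wired3 n A1s A2s A3s Qs W1 W2 W3 a1 a2 a3 x1 x2 x3"
    if x: "x1 \<in> X1'" "x2 \<in> X2'" "x3 \<in> X3'" for a1 a2 a3 x1 x2 x3
    unfolding wired3_def
  proof (intro sum_nonneg)
    fix \<alpha>1 \<alpha>2 \<alpha>3 assume a1: "\<alpha>1 \<in> PiE {..<n} A1s" and a2: "\<alpha>2 \<in> PiE {..<n} A2s"
      and a3: "\<alpha>3 \<in> PiE {..<n} A3s"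
    have "0 \<le> Qs i (\<alpha>1 i) (\<alpha>2 i) (\<alpha>3 i) (input_of (run W1 x1 \<alpha>1 n) i)
      (input_of (run W2 x2 \<alpha>2 n) i) (input_of (run W3 x3 \<alpha>3 n) i)" if i: "i < n" for i
    proof -
      have "\<alpha>1 i \<in> A1s i" "\<alpha>2 i \<in> A2s i" "\<alpha>3 i \<in> A3s i" using a1 a2 a3 i by auto
      then show ?thesis using nn wdom[OF v1 x(1) _ a1] wdom[OF v2 x(2) _ a2] wdom[OF v3 x(3) _ a3] ne' i by auto
    qed
    then show "0 \<le> (if snd W1 x1 (run W1 x1 \<alpha>1 n) = a1 \<and> snd W2 x2 (run W2 x2 \<alpha>2 n) = a2 \<and> snd W3 x3 (run W3 x3 \<alpha>3 n) = a3
       then (\<Prod>i<n. Qs i (\<alpha>1 i) (\<alpha>2 i) (\<alpha>3 i) (input_of (run W1 x1 \<alpha>1 n) i)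
      (input_of (run W2 x2 \<alpha>2 n) i) (input_of (run W3 x3 \<alpha>3 n) i)) else 0)"
      by (auto intro!: prod_nonneg)
  qed

  have total: "(\<Sum>a1\<in>A1'. \<Sum>a2\<in>A2'. \<Sum>a3\<in>A3'. wired3 n A1s A2s A3s Qs W1 W2 W3 a1 a2 a3 x1 x2 x3) = 1"
    if x: "x1 \<in> X1'" "x2 \<in> X2'" "x3 \<in> X3'" for x1 x2 x3
  proof -
    define S where "S i b1 u1 = (\<Sum>b2\<in>A2s i. R3 i b1 b2 u1 (x20 i))" for i b1 u1
    have "(\<Sum>a1\<in>A1'. \<Sum>a2\<in>A2'. \<Sum>a3\<in>A3'. wired3 n A1s A2s A3s Qs W1 W2 W3 a1 a2 a3 x1 x2 x3)
       = (\<Sum>a1\<in>A1'. \<Sum>a2\<in>A2'. wired n A1s A2s R3 W1 W2 a1 a2 x1 x2)"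
      using M3a[OF x] by simp
    also have "\<dots> = 1"
    proof (rule norm2[OF v1 v2 x(1,2) _ fin(1,2)])
      show "\<forall>i<n. A1s i \<noteq> {} \<and> A2s i \<noteq> {}" using ne by blast
      show "\<forall>i<n. \<forall>b1\<in>A1s i. \<forall>u1\<in>X1s i. \<forall>u2\<in>X2s i. (\<Sum>b2\<in>A2s i. R3 i b1 b2 u1 u2) = S i b1 u1"
      proof (intro allI impI ballI)
        fix i b1 u1 u2 assume i: "i < n" and b1: "b1 \<in> A1s i" and u1: "u1 \<in> X1s i" and u2: "u2 \<in> X2s i"
        have "(\<Sum>b2\<in>A2s i. R3 i b1 b2 u1 u2) = (\<Sum>b3\<in>A3s i. \<Sum>b2\<in>A2s i. Qs i b1 b2 b3 u1 u2 (x30 i))"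
          unfolding R3_def by (rule sum.swap)
        also have "\<dots> = (\<Sum>b3\<in>A3s i. \<Sum>b2\<in>A2s i. Qs i b1 b2 b3 u1 (x20 i) (x30 i))"
          by (rule sum.cong[OF refl], rule ns_2[OF nsi[OF i]]) (simp_all add: b1 u1 u2 x0[OF i])
        also have "\<dots> = S i b1 u1"
          unfolding S_def R3_def by (rule sum.swap)
        finally show "(\<Sum>b2\<in>A2s i. R3 i b1 b2 u1 u2) = S i b1 u1" .
      qed
      show "\<forall>i<n. \<forall>u1\<in>X1s i. (\<Sum>b1\<in>A1s i. S i b1 u1) = 1"
        using tot x0 unfolding S_def R3_def by auto
    qed
    finally show ?thesis .
  qed

  show ?thesis
    unfolding ns_box3_def is_box3_def no_signalling3_def
  proof (intro conjI ballI)
    fix x1 x2 x3 a1 a2 a3 assume "x1 \<in> X1'" "x2 \<in> X2'" "x3 \<in> X3'"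
    then show "0 \<le> wired3 n A1s A2s A3s Qs W1 W2 W3 a1 a2 a3 x1 x2 x3" by (rule nonneg)
  next
    fix x1 x2 x3 assume "x1 \<in> X1'" "x2 \<in> X2'" "x3 \<in> X3'"
    then show "(\<Sum>a1\<in>A1'. \<Sum>a2\<in>A2'. \<Sum>a3\<in>A3'. wired3 n A1s A2s A3s Qs W1 W2 W3 a1 a2 a3 x1 x2 x3) = 1"
      by (rule total)
  next
    fix a2 a3 x1 x1' x2 x3 assume "x1 \<in> X1'" "x1' \<in> X1'" "x2 \<in> X2'" "x3 \<in> X3'"
    then show "(\<Sum>a1\<in>A1'. wired3 n A1s A2s A3s Qs W1 W2 W3 a1 a2 a3 x1 x2 x3) =
           (\<Sum>a1\<in>A1'. wired3 n A1s A2s A3s Qs W1 W2 W3 a1 a2 a3 x1' x2 x3)"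
      using M1a by metis
  next
    fix a1 a3 x1 x2 x2' x3 assume "x1 \<in> X1'" "x2 \<in> X2'" "x2' \<in> X2'" "x3 \<in> X3'"
    then show "(\<Sum>a2\<in>A2'. wired3 n A1s A2s A3s Qs W1 W2 W3 a1 a2 a3 x1 x2 x3) =
           (\<Sum>a2\<in>A2'. wired3 n A1s A2s A3s Qs W1 W2 W3 a1 a2 a3 x1 x2' x3)"
      using M2a by metis
  next
    fix a1 a2 x1 x2 x3 x3' assume "x1 \<in> X1'" "x2 \<in> X2'" "x3 \<in> X3'" "x3' \<in> X3'"
    then show "(\<Sum>a3\<in>A3'. wired3 n A1s A2s A3s Qs W1 W2 W3 a1 a2 a3 x1 x2 x3) =
           (\<Sum>a3\<in>A3'. wired3 n A1s A2s A3s Qs W1 W2 W3 a1 a2 a3 x1 x2 x3')"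
      using M3a by metis
  qed
qed


theorem theorem2:
  fixes n :: nat
    and Xs Ys As Bs :: "nat \<Rightarrow> nat set"
    and Ps :: "nat \<Rightarrow> box2"
    and X' Y' A' B' :: "nat set"
    and WA WB :: wiring
  assumes "\<forall>i<n. scenario (Xs i) (Ys i) (As i) (Bs i)"
    and "\<forall>i<n. GW (Xs i) (Ys i) (As i) (Bs i) (Ps i)"
    and "scenario X' Y' A' B'"
    and "valid_wiring n Xs As X' A' WA"
    and "valid_wiring n Ys Bs Y' B' WB"
  shows "GW X' Y' A' B' (wired n As Bs Ps WA WB)"
proof -
  note vA = assms(4) and vB = assms(5)
  have sc: "finite A'" "finite B'" using assms(3) unfolding scenario_def by auto
  have ne: "\<forall>i<n. As i \<noteq> {} \<and> Bs i \<noteq> {} \<and> Xs i \<noteq> {} \<and> Ys i \<noteq> {}"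
    using assms(1) unfolding scenario_def by blast
  define G where "G i PA PB \<longleftrightarrow>
        ns_box3 (Xs i) (Xs i) (Ys i) (As i) (As i) (Bs i) PA \<and> ns_box3 (Xs i) (Ys i) (Ys i) (As i) (Bs i) (Bs i) PB \<and>
        (\<forall>a\<in>As i. \<forall>a'\<in>As i. \<forall>b\<in>Bs i. \<forall>x\<in>Xs i. \<forall>x'\<in>Xs i. \<forall>y\<in>Ys i.
            PA a a' b x x' y = PA a' a b x' x y) \<and>
        (\<forall>a\<in>As i. \<forall>b\<in>Bs i. \<forall>b'\<in>Bs i. \<forall>x\<in>Xs i. \<forall>y\<in>Ys i. \<forall>y'\<in>Ys i.
            PB a b b' x y y' = PB a b' b x y' y) \<and>
        (\<forall>a\<in>As i. \<forall>b\<in>Bs i. \<forall>x\<in>Xs i. \<forall>y\<in>Ys i. \<forall>x'\<in>Xs i. \<forall>y'\<in>Ys i.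
            Ps i a b x y = (\<Sum>a'\<in>As i. PA a a' b x x' y) \<and>
            Ps i a b x y = (\<Sum>b'\<in>Bs i. PB a b b' x y y'))" for i PA PB
  have "\<forall>i. \<exists>PA. \<exists>PB. i < n \<longrightarrow> G i PA PB"
  proof
    fix i show "\<exists>PA PB. i < n \<longrightarrow> G i PA PB"
    proof (cases "i < n")
      case True
      then have "GW (Xs i) (Ys i) (As i) (Bs i) (Ps i)" using assms(2) by blast
      then have "\<exists>PA PB. G i PA PB" unfolding GW_def G_def by (rule conjunct2)
      then show ?thesis by blast
    qed simp
  qed
  then obtain PAs where "\<forall>i. \<exists>PB. i < n \<longrightarrow> G i (PAs i) PB" by metis
  then obtain PBs where GG: "\<forall>i. i < n \<longrightarrow> G i (PAs i) (PBs i)" by metis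
  then have Gi: "G i (PAs i) (PBs i)" if "i < n" for i using that by blast
  have nsA: "\<forall>i<n. ns_box3 (Xs i) (Xs i) (Ys i) (As i) (As i) (Bs i) (PAs i)"
    using Gi unfolding G_def by blast
  have nsB: "\<forall>i<n. ns_box3 (Xs i) (Ys i) (Ys i) (As i) (Bs i) (Bs i) (PBs i)"
    using Gi unfolding G_def by blast
  have symA: "\<forall>i<n. \<forall>a\<in>As i. \<forall>a'\<in>As i. \<forall>b\<in>Bs i. \<forall>x\<in>Xs i. \<forall>x'\<in>Xs i. \<forall>y\<in>Ys i.
            PAs i a a' b x x' y = PAs i a' a b x' x y"
    using Gi unfolding G_def by blast
  have symB: "\<forall>i<n. \<forall>a\<in>As i. \<forall>b\<in>Bs i. \<forall>b'\<in>Bs i. \<forall>x\<in>Xs i. \<forall>y\<in>Ys i. \<forall>y'\<in>Ys i.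
            PBs i a b b' x y y' = PBs i a b' b x y' y"
    using Gi unfolding G_def by blast
  have mA: "\<forall>i<n. \<forall>a\<in>As i. \<forall>b\<in>Bs i. \<forall>x\<in>Xs i. \<forall>y\<in>Ys i. \<forall>x'\<in>Xs i.
            (\<Sum>a'\<in>As i. PAs i a a' b x x' y) = Ps i a b x y"
    using Gi unfolding G_def by (metis (no_types, lifting))
  have mB: "\<forall>i<n. \<forall>a\<in>As i. \<forall>b\<in>Bs i. \<forall>x\<in>Xs i. \<forall>y\<in>Ys i. \<forall>y'\<in>Ys i.
            (\<Sum>b'\<in>Bs i. PBs i a b b' x y y') = Ps i a b x y"
    using Gi unfolding G_def by (metis (no_types, lifting))
  define PA' where "PA' = wired3 n As As Bs PAs WA WA WB"
  define PB' where "PB' = wired3 n As Bs Bs PBs WA WB WB"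
  define P' where "P' = wired n As Bs Ps WA WB"
  have nsPA': "ns_box3 X' X' Y' A' A' B' PA'"
    unfolding PA'_def by (rule wired3_ns[OF vA vA vB sc(1,1,2)]) (use ne nsA in blast)+
  have nsPB': "ns_box3 X' Y' Y' A' B' B' PB'"
    unfolding PB'_def by (rule wired3_ns[OF vA vB vB sc(1,2,2)]) (use ne nsB in blast)+
  have symA': "PA' a a' b x x' y = PA' a' a b x' x y"
    if "x \<in> X'" "x' \<in> X'" "y \<in> Y'" for a a' b x x' y
    unfolding PA'_def
    apply (subst swap12)
    apply (rule wired3_cong[OF vA vA vB that(2,1,3)])
    using ne apply blast
    using symA by auto
  have symB': "PB' a b b' x y y' = PB' a b' b x y' y"
    if "x \<in> X'" "y \<in> Y'" "y' \<in> Y'" for a b b' x y y'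
    unfolding PB'_def
    apply (subst swap23)
    apply (rule wired3_cong[OF vA vB vB that(1,3,2)])
    using ne apply blast
    using symB by auto
  have margA: "P' a b x y = (\<Sum>a'\<in>A'. PA' a a' b x x' y)"
    if "x \<in> X'" "y \<in> Y'" "x' \<in> X'" for a b x y x'
  proof -
    have "(\<Sum>a'\<in>A'. PA' a a' b x x' y) = (\<Sum>a'\<in>A'. wired3 n As Bs As (\<lambda>i b1 b2 b3 y1 y2 y3. PAs i b1 b3 b2 y1 y3 y2) WA WB WA a b a' x y x')"
      unfolding PA'_def by (rule sum.cong[OF refl], rule swap23)
    also have "\<dots> = P' a b x y"
      unfolding P'_def
      apply (rule M3[OF vA vB vA that(1,2,3)])
      using ne sc mA by auto
    finally show ?thesis by simp
  qed
  have margB: "P' a b x y = (\<Sum>b'\<in>B'. PB' a b b' x y y')"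
    if "x \<in> X'" "y \<in> Y'" "y' \<in> Y'" for a b x y y'
    unfolding P'_def PB'_def
    apply (rule M3[OF vA vB vB that(1,2,3), symmetric])
    using ne sc mB by auto
  have box: "is_box2 X' Y' A' B' P'"
    unfolding is_box2_def
  proof (intro ballI conjI)
    fix x y a b assume x: "x \<in> X'" and y: "y \<in> Y'" and a: "a \<in> A'" and b: "b \<in> B'"
    show "0 \<le> P' a b x y" unfolding margB[OF x y y]
      by (rule sum_nonneg, rule ns_nn[OF nsPB']) (use x y a b in auto)
  next
    fix x y assume x: "x \<in> X'" and y: "y \<in> Y'"
    show "(\<Sum>a\<in>A'. \<Sum>b\<in>B'. P' a b x y) = 1"
      unfolding margB[OF x y y] by (rule ns_tot[OF nsPB' x y y])
  qed
  show ?thesis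
    unfolding GW_def P'_def[symmetric]
    apply (rule conjI[OF box])
    apply (rule exI[of _ PA'], rule exI[of _ PB'])
    apply (intro conjI nsPA' nsPB' ballI)
       apply (erule (2) symA')
      apply (erule (2) symB')
     apply (erule (2) margA)
    by (erule (1) margB, assumption)
qed

end
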